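(* If $\tau\in\mathcal{L}$ and $C(\tau)$ is a meager subset of the Euclidean space $\mathbb{R}$, then $(\mathbb{R},\tau)$ is a Baire space.
   Context: $\eta$ denotes the Euclidean topology on $\mathbb{R}$. $\mathcal{L}$ denotes the family of all Hausdorff topologies $\tau$ on $\mathbb{R}$ with $\tau\subset\eta$. For $\tau\in\mathcal{L}$ and $a\in\mathbb{R}$ let $\mathcal{N}_\tau(a)$ be the neighborhood filter of $a$ in $(\mathbb{R},\tau)$; $C(\tau)$ is the set of all $a\in\mathbb{R}$ with $\mathcal{N}_\tau(a)\neq\mathcal{N}_\eta(a)$. *)

theory Defs
  imports "HOL-Analysis.Analysis"
begin

definition nbhds :: "'a topology \<Rightarrow> 'a \<Rightarrow> 'a set set" where
  "nbhds X a = {N. \<exists>U. openin X U \<and> a \<in> U \<and> U \<subseteq> N}"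

text \<open>The family L: Hausdorff topologies on the reals coarser than the Euclidean one.\<close>
definition coarser_hausdorff :: "real topology \<Rightarrow> bool" where
  "coarser_hausdorff T \<longleftrightarrow> topspace T = UNIV \<and> Hausdorff_space T \<and>
     (\<forall>U. openin T U \<longrightarrow> open U)"

definition Cset :: "real topology \<Rightarrow> real set" where
  "Cset T = {a. nbhds T a \<noteq> nbhds euclidean a}"

definition nowhere_dense_in :: "'a topology \<Rightarrow> 'a set \<Rightarrow> bool" where
  "nowhere_dense_in X S \<longleftrightarrow> S \<subseteq> topspace X \<and> X interior_of (X closure_of S) = {}"

definition meager_in :: "'a topology \<Rightarrow> 'a set \<Rightarrow> bool" where
  "meager_in X S \<longleftrightarrow> (\<exists>\<G>. countable \<G> \<and> (\<forall>N\<in>\<G>. nowhere_dense_in X N) \<and> S \<subseteq> \<Union>\<G>)"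

definition baire_space :: "'a topology \<Rightarrow> bool" where
  "baire_space X \<longleftrightarrow> (\<forall>\<G>. countable \<G> \<and>
      (\<forall>U\<in>\<G>. openin X U \<and> X closure_of U = topspace X) \<longrightarrow>
      X closure_of (topspace X \<inter> \<Inter>\<G>) = topspace X)"

end

theory Submission
  imports Defs
begin

lemma good_point:
  fixes T :: "real topology"
  assumes "meager_in euclidean (Cset T)" and "open V" and "V \<noteq> {}"
  shows "\<exists>a\<in>V. a \<notin> Cset T"
proof -
  obtain \<G> where G: "countable \<G>" "\<And>N. N\<in>\<G> \<Longrightarrow> nowhere_dense_in euclidean N" "Cset T \<subseteq> \<Union>\<G>"
    using assms(1) unfolding meager_in_def by blast
  define \<H> where "\<H> = (\<lambda>N. - closure N) ` \<G>"
  have "UNIV \<subseteq> closure (\<Inter>\<H>)"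
  proof (rule Baire)
    show "countable \<H>" using G(1) unfolding \<H>_def by simp
    fix U assume "U \<in> \<H>"
    then obtain N where N: "N \<in> \<G>" "U = - closure N" unfolding \<H>_def by blast
    have "interior (closure N) = {}" using G(2)[OF N(1)] unfolding nowhere_dense_in_def by simp
    then show "openin (top_of_set UNIV) U \<and> UNIV \<subseteq> closure U"
      using N(2) by (simp add: closure_complement open_Compl)
  qed simp
  then have "V \<inter> closure (\<Inter>\<H>) \<noteq> {}" using assms(3) by blast
  then have "V \<inter> \<Inter>\<H> \<noteq> {}" using open_Int_closure_eq_empty assms(2) by blast
  then obtain a where a: "a \<in> V" "a \<in> \<Inter>\<H>" by blast
  have "a \<notin> \<Union>\<G>"
  proof
    assume "a \<in> \<Union>\<G>"
    then obtain N where "N \<in> \<G>" "a \<in> N" by blast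
    then show False using a(2) closure_subset unfolding \<H>_def by blast
  qed
  then show ?thesis using a(1) G(3) by blast
qed

theorem proposition4:
  fixes T :: "real topology"
  assumes "coarser_hausdorff T"
    and "meager_in euclidean (Cset T)"
  shows "baire_space T"
proof -
  have top: "topspace T = UNIV" and op: "\<And>U. openin T U \<Longrightarrow> open U"
    using assms(1) unfolding coarser_hausdorff_def by auto
  have dense: "closure U = UNIV" if U: "openin T U" "T closure_of U = topspace T" for U
  proof -
    have "V \<inter> U \<noteq> {}" if V: "open V" "V \<noteq> {}" for V
    proof -
      obtain a where a: "a \<in> V" "a \<notin> Cset T" using good_point[OF assms(2) V] by blast
      have "V \<in> nbhds euclidean a" using a(1) V(1) unfolding nbhds_def by auto
      then have "V \<in> nbhds T a" using a(2) unfolding Cset_def by simp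
      then obtain W where W: "openin T W" "a \<in> W" "W \<subseteq> V" unfolding nbhds_def by auto
      have "a \<in> T closure_of U" using U(2) top by simp
      then obtain y where "y \<in> U" "y \<in> W" using W unfolding in_closure_of by blast
      then show ?thesis using W(3) by blast
    qed
    note VU = this
    have "x \<in> closure U" for x
    proof (rule ccontr)
      assume "x \<notin> closure U"
      then have "- closure U \<inter> U \<noteq> {}" using VU[of "- closure U"] by auto
      then show False using closure_subset[of U] by auto
    qed
    then show ?thesis by blast
  qed
  show ?thesis unfolding baire_space_def
  proof (intro allI impI)
    fix \<G> assume H: "countable \<G> \<and> (\<forall>U\<in>\<G>. openin T U \<and> T closure_of U = topspace T)"
    have B: "UNIV \<subseteq> closure (\<Inter>\<G>)"
    proof (rule Baire)
      show "countable \<G>" using H by blast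
      fix U assume "U \<in> \<G>"
      then have "openin T U" "T closure_of U = topspace T" using H by auto
      then show "openin (top_of_set UNIV) U \<and> UNIV \<subseteq> closure U"
        using op dense by simp
    qed simp
    show "T closure_of (topspace T \<inter> \<Inter>\<G>) = topspace T"
    proof (rule subset_antisym)
      show "T closure_of (topspace T \<inter> \<Inter>\<G>) \<subseteq> topspace T" by (rule closure_of_subset_topspace)
      show "topspace T \<subseteq> T closure_of (topspace T \<inter> \<Inter>\<G>)"
      proof
        fix x assume "x \<in> topspace T"
        have "\<exists>y. y \<in> topspace T \<inter> \<Inter>\<G> \<and> y \<in> W" if "x \<in> W" "openin T W" for W
        proof -
          have "open W" "W \<noteq> {}" using op that by auto
          then have "W \<inter> \<Inter>\<G> \<noteq> {}" using B open_Int_closure_eq_empty by blast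
          then show ?thesis using top by blast
        qed
        then show "x \<in> T closure_of (topspace T \<inter> \<Inter>\<G>)"
          using \<open>x \<in> topspace T\<close> unfolding in_closure_of by blast
      qed
    qed
  qed
qed

end
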